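(* Let $A$ be a real reduced multiring. Define a ternary relation $D$ on $A$ by $d\in D(a,b)$ iff $d\in d^2a+d^2b$. Then $(A,\cdot,1,0,-1,D)$ is a real semigroup, and its transversal representation satisfies $D^t(a,b)=a+b$ for all $a,b\in A$.
   Context: A multiring is a tuple $(R,+,\cdot,-,0,1)$ with $+:R\times R\to\mathcal P(R)\setminus\{\emptyset\}$ satisfying: $z\in x+y\Rightarrow x\in z+(-y)$ and $y\in(-x)+z$; $y\in0+x\iff y=x$; $(x+y)+z=x+(y+z)$ (with $Z+w=\bigcup_{z\in Z}(z+w)$); $x+y=y+x$; $(R,\cdot,1)$ a commutative monoid; $a0=0$; $c\in a+b\Rightarrow cd\in ad+bd$. A multiring $A$ is real reduced if $1\ne0$ and for all $a,b,c,d$: $a^3=a$; $c\in a+ab^2\Rightarrow c=a$; $c,d\in a^2+b^2\Rightarrow c=d$. In $A$, $-1$ denotes $-(1)$. A ternary semigroup is $(S,\cdot,1,0,-1)$ with: $(S,\cdot,1)$ a commutative semigroup with unity; $x^3=x$; $-1\ne1$, $(-1)(-1)=1$; $x0=0$; $x=(-1)x\Rightarrow x=0$. A real semigroup is a ternary semigroup with a ternary relation $D$, where $a\in D^t(b,c)$ means $a\in D(b,c)$, $-b\in D(-a,c)$ and $-c\in D(b,-a)$ (with $-x=(-1)x$), satisfying: (RS0) $c\in D(a,b)\iff c\in D(b,a)$; (RS1) $a\in D(a,b)$; (RS2) $a\in D(b,c)\Rightarrow ad\in D(bd,cd)$; (RS3) $a\in D^t(b,c)$, $c\in D^t(d,e)\Rightarrow\exists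 x\in D^t(b,d)$ with $a\in D^t(x,e)$; (RS4) $e\in D(c^2a,d^2b)\Rightarrow e\in D(a,b)$; (RS5) $ad=bd$, $ae=be$, $c\in D(d,e)\Rightarrow ac=bc$; (RS6) $c\in D(a,b)\Rightarrow c\in D^t(c^2a,c^2b)$; (RS7) $D^t(a,-b)\cap D^t(b,-a)\ne\emptyset\Rightarrow a=b$; (RS8) $a\in D(b,c)\Rightarrow a^2\in D(b^2,c^2)$. *)

theory Defs
  imports Main
begin

definition multiring ::
  "('a \<Rightarrow> 'a \<Rightarrow> 'a set) \<Rightarrow> ('a \<Rightarrow> 'a) \<Rightarrow> ('a \<Rightarrow> 'a \<Rightarrow> 'a) \<Rightarrow> 'a \<Rightarrow> 'a \<Rightarrow> bool" where
  "multiring add neg mul zero one \<longleftrightarrow>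
     (\<forall>x y. add x y \<noteq> {}) \<and>
     (\<forall>x y z. z \<in> add x y \<longrightarrow> x \<in> add z (neg y) \<and> y \<in> add (neg x) z) \<and>
     (\<forall>x y. y \<in> add zero x \<longleftrightarrow> y = x) \<and>
     (\<forall>x y z. (\<Union>w\<in>add x y. add w z) = (\<Union>w\<in>add y z. add x w)) \<and>
     (\<forall>x y. add x y = add y x) \<and>
     (\<forall>x y z. mul (mul x y) z = mul x (mul y z)) \<and>
     (\<forall>x y. mul x y = mul y x) \<and>
     (\<forall>x. mul x one = x) \<and>
     (\<forall>a. mul a zero = zero) \<and>
     (\<forall>a b c d. c \<in> add a b \<longrightarrow> mul c d \<in> add (mul a d) (mul b d))"

definition real_reduced_multiring ::
  "('a \<Rightarrow> 'a \<Rightarrow> 'a set) \<Rightarrow> ('a \<Rightarrow> 'a) \<Rightarrow> ('a \<Rightarrow> 'a \<Rightarrow> 'a) \<Rightarrow> 'a \<Rightarrow> 'a \<Rightarrow> bool" where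
  "real_reduced_multiring add neg mul zero one \<longleftrightarrow>
     multiring add neg mul zero one \<and> one \<noteq> zero \<and>
     (\<forall>a. mul a (mul a a) = a) \<and>
     (\<forall>a b c. c \<in> add a (mul a (mul b b)) \<longrightarrow> c = a) \<and>
     (\<forall>a b c d. c \<in> add (mul a a) (mul b b) \<and> d \<in> add (mul a a) (mul b b) \<longrightarrow> c = d)"

definition ternary_semigroup ::
  "('a \<Rightarrow> 'a \<Rightarrow> 'a) \<Rightarrow> 'a \<Rightarrow> 'a \<Rightarrow> 'a \<Rightarrow> bool" where
  "ternary_semigroup mul one zero m1 \<longleftrightarrow>
     (\<forall>x y z. mul (mul x y) z = mul x (mul y z)) \<and>
     (\<forall>x y. mul x y = mul y x) \<and>
     (\<forall>x. mul x one = x) \<and>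
     (\<forall>x. mul x (mul x x) = x) \<and>
     m1 \<noteq> one \<and> mul m1 m1 = one \<and>
     (\<forall>x. mul x zero = zero) \<and>
     (\<forall>x. x = mul m1 x \<longrightarrow> x = zero)"

definition Dt ::
  "('a \<Rightarrow> 'a \<Rightarrow> 'a) \<Rightarrow> 'a \<Rightarrow> ('a \<Rightarrow> 'a \<Rightarrow> 'a set) \<Rightarrow> 'a \<Rightarrow> 'a \<Rightarrow> 'a set" where
  "Dt mul m1 D b c = {a. a \<in> D b c \<and> mul m1 b \<in> D (mul m1 a) c \<and> mul m1 c \<in> D b (mul m1 a)}"

definition real_semigroup ::
  "('a \<Rightarrow> 'a \<Rightarrow> 'a) \<Rightarrow> 'a \<Rightarrow> 'a \<Rightarrow> 'a \<Rightarrow> ('a \<Rightarrow> 'a \<Rightarrow> 'a set) \<Rightarrow> bool" where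
  "real_semigroup mul one zero m1 D \<longleftrightarrow>
     ternary_semigroup mul one zero m1 \<and>
     (\<forall>a b c. c \<in> D a b \<longleftrightarrow> c \<in> D b a) \<and>
     (\<forall>a b. a \<in> D a b) \<and>
     (\<forall>a b c d. a \<in> D b c \<longrightarrow> mul a d \<in> D (mul b d) (mul c d)) \<and>
     (\<forall>a b c d e. a \<in> Dt mul m1 D b c \<and> c \<in> Dt mul m1 D d e \<longrightarrow>
        (\<exists>x \<in> Dt mul m1 D b d. a \<in> Dt mul m1 D x e)) \<and>
     (\<forall>a b c d e. e \<in> D (mul (mul c c) a) (mul (mul d d) b) \<longrightarrow> e \<in> D a b) \<and>
     (\<forall>a b c d e. mul a d = mul b d \<and> mul a e = mul b e \<and> c \<in> D d e \<longrightarrow> mul a c = mul b c) \<and>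
     (\<forall>a b c. c \<in> D a b \<longrightarrow> c \<in> Dt mul m1 D (mul (mul c c) a) (mul (mul c c) b)) \<and>
     (\<forall>a b. Dt mul m1 D a (mul m1 b) \<inter> Dt mul m1 D b (mul m1 a) \<noteq> {} \<longrightarrow> a = b) \<and>
     (\<forall>a b c. a \<in> D b c \<longrightarrow> mul a a \<in> D (mul b b) (mul c c))"

end

theory Submission
  imports Defs
begin

locale rrm =
  fixes add :: "'a \<Rightarrow> 'a \<Rightarrow> 'a set" and neg :: "'a \<Rightarrow> 'a"
    and mul :: "'a \<Rightarrow> 'a \<Rightarrow> 'a" and zero one :: 'a
  assumes RR: "real_reduced_multiring add neg mul zero one"
begin

lemma MR: "multiring add neg mul zero one" using RR unfolding real_reduced_multiring_def by (rule conjunct1)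
lemmas MRs = MR[unfolded multiring_def]
lemmas RRs = RR[unfolded real_reduced_multiring_def, THEN conjunct2]

lemma ne0: "add x y \<noteq> {}" using MRs[THEN conjunct1] by blast
lemma ne: "\<exists>z. z \<in> add x y" using ne0 by blast
lemma rev1: "z \<in> add x y \<Longrightarrow> x \<in> add z (neg y)" using MRs[THEN conjunct2, THEN conjunct1] by blast
lemma rev2: "z \<in> add x y \<Longrightarrow> y \<in> add (neg x) z" using MRs[THEN conjunct2, THEN conjunct1] by blast
lemma zer: "y \<in> add zero x \<longleftrightarrow> y = x" using MRs[THEN conjunct2, THEN conjunct2, THEN conjunct1] by blast
lemmas assoc_set = MRs[THEN conjunct2, THEN conjunct2, THEN conjunct2, THEN conjunct1, rule_format]
lemma comm: "add x y = add y x" using MRs[THEN conjunct2, THEN conjunct2, THEN conjunct2, THEN conjunct2, THEN conjunct1] by blast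
lemma mA: "mul (mul x y) z = mul x (mul y z)" using MRs[THEN conjunct2, THEN conjunct2, THEN conjunct2, THEN conjunct2, THEN conjunct2, THEN conjunct1] by blast
lemma mC: "mul x y = mul y x" using MRs[THEN conjunct2, THEN conjunct2, THEN conjunct2, THEN conjunct2, THEN conjunct2, THEN conjunct2, THEN conjunct1] by blast
lemma m1: "mul x one = x" using MRs[THEN conjunct2, THEN conjunct2, THEN conjunct2, THEN conjunct2, THEN conjunct2, THEN conjunct2, THEN conjunct2, THEN conjunct1] by blast
lemma m0: "mul x zero = zero" using MRs[THEN conjunct2, THEN conjunct2, THEN conjunct2, THEN conjunct2, THEN conjunct2, THEN conjunct2, THEN conjunct2, THEN conjunct2, THEN conjunct1] by blast
lemma dist: "c \<in> add a b \<Longrightarrow> mul c d \<in> add (mul a d) (mul b d)" using MRs[THEN conjunct2, THEN conjunct2, THEN conjunct2, THEN conjunct2, THEN conjunct2, THEN conjunct2, THEN conjunct2, THEN conjunct2, THEN conjunct2] by blast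
lemma one_ne: "one \<noteq> zero" using RRs[THEN conjunct1] by blast
lemma cube: "mul a (mul a a) = a" using RRs[THEN conjunct2, THEN conjunct1] by blast
lemma R1: "c \<in> add a (mul a (mul b b)) \<Longrightarrow> c = a" using RRs[THEN conjunct2, THEN conjunct2, THEN conjunct1] by blast
lemma R2: "c \<in> add (mul a a) (mul b b) \<Longrightarrow> d \<in> add (mul a a) (mul b b) \<Longrightarrow> c = d" using RRs[THEN conjunct2, THEN conjunct2, THEN conjunct2] by blast

lemma mLC: "mul x (mul y z) = mul y (mul x z)"
  by (subst mA[symmetric], subst mC[of x y], rule mA)
lemmas mac = mA mC mLC
lemma m1l[simp]: "mul one x = x" using m1[of x] mC[of one x] by simp
lemma m0l[simp]: "mul zero x = zero" using m0[of x] mC[of zero x] by simp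
declare m1[simp] m0[simp] cube[simp]
lemma cube2[simp]: "mul a (mul a (mul a b)) = mul a b"
proof -
  have "mul a (mul a (mul a b)) = mul (mul a (mul a a)) b" by (simp only: mA)
  thus ?thesis by simp
qed
lemma sq_idem[simp]: "mul (mul a a) (mul a a) = mul a a" by (simp only: mA cube2)
lemma sq_idem2[simp]: "mul a (mul a (mul a (mul a b))) = mul a (mul a b)" by (simp only: cube2)

lemma assoc_l: "w \<in> add u z \<Longrightarrow> u \<in> add x y \<Longrightarrow> \<exists>v. v \<in> add y z \<and> w \<in> add x v"
proof -
  assume "w \<in> add u z" "u \<in> add x y"
  hence "w \<in> (\<Union>w\<in>add x y. add w z)" by blast
  thus ?thesis using assoc_set by blast
qed
lemma assoc_r: "w \<in> add x v \<Longrightarrow> v \<in> add y z \<Longrightarrow> \<exists>u. u \<in> add x y \<and> w \<in> add u z"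
proof -
  assume "w \<in> add x v" "v \<in> add y z"
  hence "w \<in> (\<Union>w\<in>add y z. add x w)" by blast
  thus ?thesis using assoc_set by blast
qed

lemma self_eq: "c \<in> add a a \<Longrightarrow> c = a" using R1[of c a one] by simp
lemma self_in: "a \<in> add a a" using ne self_eq by blast
lemma R1_in: "a \<in> add a (mul a (mul b b))" using ne R1 by blast
lemma zero_in: "zero \<in> add x (neg x)"
proof -
  have "x \<in> add zero x" using zer by simp
  thus ?thesis using rev1 by blast
qed
lemma neg_uniq: "zero \<in> add x y \<Longrightarrow> y = neg x"
proof -
  assume "zero \<in> add x y"
  hence "y \<in> add (neg x) zero" by (rule rev2)
  thus ?thesis using zer comm by blast
qed
lemma neg_mul: "neg x = mul (neg one) x"
proof -
  have "zero \<in> add one (neg one)" by (rule zero_in)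
  hence "mul zero x \<in> add (mul one x) (mul (neg one) x)" by (rule dist)
  hence "zero \<in> add x (mul (neg one) x)" by simp
  from neg_uniq[OF this] show ?thesis by simp
qed
lemma neg_neg[simp]: "neg (neg x) = x"
proof -
  have "zero \<in> add (neg x) x" using zero_in comm by blast
  from neg_uniq[OF this] show ?thesis by simp
qed
lemma mm: "mul (neg one) (neg one) = one" using neg_mul[of "neg one"] by simp
lemma nm: "mul w (neg one) = neg w" using neg_mul[of w] mC[of w "neg one"] by simp
lemma neg_sum: "z \<in> add x y \<Longrightarrow> neg z \<in> add (neg x) (neg y)"
  using dist[of z x y "neg one"] by (simp only: nm)
lemma neg_mul_l: "mul (neg x) y = neg (mul x y)" by (simp only: neg_mul[of x] neg_mul[of "mul x y"] mA)
lemma neg_mul_r: "mul x (neg y) = neg (mul x y)" by (simp only: neg_mul[of y] neg_mul[of "mul x y"] mLC)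
lemma neg_sq: "mul (neg x) (neg x) = mul x x" by (simp add: neg_mul_l neg_mul_r)

lemma L1: "one \<in> add one y"
proof -
  obtain t where t: "t \<in> add one y" using ne by blast
  have ty: "mul t y \<in> add y (mul y y)" using dist[OF t, of y] by simp
  have tt: "mul t t \<in> add t (mul y t)" using dist[OF t, of t] by simp
  obtain v where v1: "v \<in> add y (mul y t)" and v2: "mul t t \<in> add one v"
    using assoc_l[OF tt t] by blast
  have v1': "v \<in> add y (mul t y)" using v1 by (simp add: mC)
  obtain u where u1: "u \<in> add y y" and u2: "v \<in> add u (mul y y)"
    using assoc_r[OF v1' ty] by blast
  have "u = y" using self_eq u1 by blast
  hence "v \<in> add (mul y y) y" using u2 comm by blast
  then obtain u' where u'1: "u' \<in> add one (mul y y)" and u'2: "mul t t \<in> add u' y"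
    using assoc_r[OF v2] by blast
  have "u' = one" using R1[of u' one y] u'1 by simp
  hence tt1: "mul t t \<in> add one y" using u'2 by simp
  have "one \<in> add one (mul t t)" using R1_in[of one t] by simp
  then obtain u'' where "u'' \<in> add one one" and "one \<in> add u'' y"
    using assoc_r tt1 by blast
  thus ?thesis using self_eq by blast
qed

lemma L1': "x \<in> add x (mul x y)"
  using dist[OF L1[of y], of x] by (simp add: mC)


lemma quad[simp]: "mul a (mul a (mul a a)) = mul a a" using cube2[of a a] by simp

lemma idem2: "mul s s = s \<Longrightarrow> mul s (mul s w) = mul s w" by (simp add: mA[symmetric])

lemma sqa: "s \<in> add (mul a a) (mul b b) \<Longrightarrow> mul a s = a"
proof -
  assume "s \<in> add (mul a a) (mul b b)"
  hence "mul s a \<in> add (mul (mul a a) a) (mul (mul b b) a)" by (rule dist)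
  hence "mul s a \<in> add a (mul a (mul b b))" by (simp add: mac)
  hence "mul s a = a" by (rule R1)
  thus ?thesis by (simp add: mC)
qed

lemma sq_s: "s \<in> add (mul a a) (mul b b) \<Longrightarrow> mul s s = s"
proof -
  assume s: "s \<in> add (mul a a) (mul b b)"
  hence "mul s s \<in> add (mul (mul a a) s) (mul (mul b b) s)" by (rule dist)
  moreover have "mul (mul a a) s = mul a a" using sqa[OF s] by (simp add: mA)
  moreover have "mul (mul b b) s = mul b b" using sqa[of s b a] s comm by (simp add: mA)
  ultimately have "mul s s \<in> add (mul a a) (mul b b)" by simp
  thus ?thesis using s R2 by blast
qed

lemma LQ:
  assumes ee: "mul e e = e" and tt: "mul t t = t" and rt: "mul r t = r" and e: "e \<in> add t r"
  shows "mul t e = e"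
proof -
  have "t \<in> add t (mul t r)" by (rule L1')
  hence "t \<in> add t r" using rt by (simp add: mC)
  hence "r \<in> add (neg t) t" by (rule rev2)
  hence "r \<in> add t (neg t)" using comm by blast
  then obtain u where u1: "u \<in> add t t" and u2: "e \<in> add u (neg t)" using assoc_r[OF e] by blast
  have "u = t" using self_eq u1 by blast
  hence "e \<in> add t (neg t)" using u2 by simp
  hence "t \<in> add e t" using rev1 by fastforce
  hence "mul t e \<in> add (mul e e) (mul t e)" by (rule dist)
  hence "mul t e \<in> add e (mul e (mul t t))" using ee tt by (simp add: mC)
  thus ?thesis by (rule R1)
qed

lemma SL:
  assumes c: "c \<in> add a b" and s: "s \<in> add (mul a a) (mul b b)"
  shows "mul c s = c"
proof -
  have ca: "mul c a \<in> add (mul a a) (mul a b)" using dist[OF c, of a] by (simp add: mC)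
  have cb: "mul c b \<in> add (mul a b) (mul b b)" using dist[OF c, of b] by simp
  have cc: "mul c c \<in> add (mul c a) (mul c b)" using dist[OF c, of c] by (simp add: mC)
  obtain v where v1: "v \<in> add (mul a b) (mul c b)" and v2: "mul c c \<in> add (mul a a) v"
    using assoc_l[OF cc ca] by blast
  obtain u where u1: "u \<in> add (mul a b) (mul a b)" and u2: "v \<in> add u (mul b b)"
    using assoc_r[OF v1 cb] by blast
  have "u = mul a b" using self_eq u1 by blast
  hence v3: "v \<in> add (mul b b) (mul a b)" using u2 comm by blast
  obtain u' where u'1: "u' \<in> add (mul a a) (mul b b)" and u'2: "mul c c \<in> add u' (mul a b)"
    using assoc_r[OF v2 v3] by blast
  have "u' = s" using R2 u'1 s by blast
  hence e: "mul c c \<in> add s (mul a b)" using u'2 by simp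
  have "mul (mul a b) s = mul b (mul a s)" by (simp only: mac)
  hence rt: "mul (mul a b) s = mul a b" using sqa[OF s] by (simp add: mC)
  have "mul s (mul c c) = mul c c" by (rule LQ[OF _ sq_s[OF s] rt e]) simp
  hence "mul c (mul s (mul c c)) = c" by simp
  thus ?thesis by (simp add: mac)
qed

lemma U:
  assumes c: "c \<in> add (mul x (mul y y)) (mul x (mul z z))" and s: "s \<in> add (mul y y) (mul z z)"
  shows "c = mul x s"
proof -
  have ss: "mul s s = s" by (rule sq_s[OF s])
  have h1: "mul c x \<in> add (mul (mul x y) (mul x y)) (mul (mul x z) (mul x z))"
    using dist[OF c, of x] by (simp add: mac)
  have h2: "mul (mul x x) s \<in> add (mul (mul x y) (mul x y)) (mul (mul x z) (mul x z))"
    using dist[OF s, of "mul x x"] by (simp add: mac)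
  have e1: "mul c x = mul (mul x x) s" using R2 h1 h2 by blast
  obtain t where t: "t \<in> add (mul (mul x (mul y y)) (mul x (mul y y))) (mul (mul x (mul z z)) (mul x (mul z z)))"
    using ne by blast
  have h3: "mul (mul x x) s \<in> add (mul (mul x (mul y y)) (mul x (mul y y))) (mul (mul x (mul z z)) (mul x (mul z z)))"
    using h2 by (simp add: mac)
  have "t = mul (mul x x) s" using R2 t h3 by blast
  hence "mul c (mul (mul x x) s) = c" using SL[OF c t] by simp
  hence "c = mul (mul c x) (mul x s)" by (simp add: mac)
  also have "\<dots> = mul (mul (mul x x) s) (mul x s)" using e1 by simp
  also have "\<dots> = mul (mul x (mul x x)) (mul s s)" by (simp only: mac)
  also have "\<dots> = mul x s" using ss by simp
  finally show ?thesis .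
qed

lemma W:
  assumes e: "e \<in> add (mul (mul g g) P) Q" and P: "mul (mul e e) P = P"
  shows "e \<in> add P Q"
proof -
  obtain s2 where s2: "s2 \<in> add (mul (mul (mul g g) P) (mul (mul g g) P)) (mul Q Q)" using ne by blast
  have es: "mul e s2 = e" by (rule SL[OF e s2])
  have Ps: "mul P s2 = P"
  proof -
    have "mul P s2 = mul (mul e (mul e s2)) P" using P by (metis mA mC)
    thus ?thesis using es P by (simp add: mA)
  qed
  have q: "Q \<in> add (mul Q (mul Q P)) Q" using L1'[of Q "mul Q P"] comm by blast
  obtain w where w1: "w \<in> add (mul (mul g g) P) (mul Q (mul Q P))" and w2: "e \<in> add w Q"
    using assoc_r[OF e q] by blast
  obtain s0 where s0: "s0 \<in> add (mul g g) (mul Q Q)" using ne by blast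
  have w1': "w \<in> add (mul P (mul g g)) (mul P (mul Q Q))" using w1 by (simp add: mac)
  have wP: "w = mul P s0" by (rule U[OF w1' s0])
  have h1: "mul (mul P P) s0 \<in> add (mul (mul P g) (mul P g)) (mul (mul P Q) (mul P Q))"
    using dist[OF s0, of "mul P P"] by (simp add: mac)
  have h2: "mul (mul P P) s2 \<in> add (mul (mul P g) (mul P g)) (mul (mul P Q) (mul P Q))"
    using dist[OF s2, of "mul P P"] by (simp add: mac)
  have "mul (mul P P) s0 = mul (mul P P) s2" using R2 h1 h2 by blast
  also have "\<dots> = mul P P" using Ps by (simp add: mac)
  finally have "mul (mul P P) s0 = mul P P" .
  hence "mul P (mul (mul P P) s0) = mul P (mul P P)" by simp
  hence "mul P s0 = P" by (simp add: mac)
  thus ?thesis using w2 wP by simp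
qed

lemma mneg: "mul (neg one) x = neg x" by (rule neg_mul[symmetric])

definition Dr :: "'a \<Rightarrow> 'a \<Rightarrow> 'a set" where
  "Dr a b = {d. d \<in> add (mul (mul d d) a) (mul (mul d d) b)}"

lemma Dt_sub: "d \<in> Dt mul (neg one) Dr a b \<Longrightarrow> d \<in> add a b"
proof -
  assume "d \<in> Dt mul (neg one) Dr a b"
  hence d1: "d \<in> add (mul (mul d d) a) (mul (mul d d) b)"
    and d2: "neg a \<in> add (mul (mul (neg a) (neg a)) (neg d)) (mul (mul (neg a) (neg a)) b)"
    and d3: "neg b \<in> add (mul (mul (neg b) (neg b)) a) (mul (mul (neg b) (neg b)) (neg d))"
    unfolding Dt_def Dr_def by (simp_all add: mneg)
  have d2': "neg a \<in> add (neg (mul (mul a a) d)) (mul (mul a a) b)" using d2 unfolding neg_sq by (simp add: neg_mul_r)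
  have d3': "neg b \<in> add (mul (mul b b) a) (neg (mul (mul b b) d))" using d3 unfolding neg_sq by (simp add: neg_mul_r)
  have "neg (mul (mul a a) d) \<in> add (neg a) (neg (mul (mul a a) b))" using rev1[OF d2'] .
  hence x: "mul (mul a a) d \<in> add a (mul (mul a a) b)" using neg_sum by fastforce
  have "neg (mul (mul b b) d) \<in> add (neg (mul (mul b b) a)) (neg b)" using rev2[OF d3'] .
  hence "mul (mul b b) d \<in> add (mul (mul b b) a) b" using neg_sum by fastforce
  hence y: "mul (mul b b) d \<in> add b (mul (mul b b) a)" using comm by blast
  obtain s where s: "s \<in> add (mul a a) (mul b b)" using ne by blast
  obtain s1 where s1: "s1 \<in> add (mul (mul (mul d d) a) (mul (mul d d) a)) (mul (mul (mul d d) b) (mul (mul d d) b))"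
    using ne by blast
  have ds1: "mul d s1 = d" by (rule SL[OF d1 s1])
  have "mul (mul d d) s \<in> add (mul (mul (mul d d) a) (mul (mul d d) a)) (mul (mul (mul d d) b) (mul (mul d d) b))"
    using dist[OF s, of "mul d d"] by (simp add: mac)
  hence "s1 = mul (mul d d) s" using R2 s1 by blast
  hence dsd: "mul d s = d" using ds1 by (simp add: mA[symmetric])
  have z: "mul d s \<in> add (mul (mul a a) d) (mul (mul b b) d)" using dist[OF s, of d] by (simp add: mC)
  obtain v where v1: "v \<in> add (mul (mul a a) b) (mul (mul b b) d)" and v2: "mul d s \<in> add a v"
    using assoc_l[OF z x] by blast
  obtain u where u1: "u \<in> add (mul (mul a a) b) b" and u2: "v \<in> add u (mul (mul b b) a)"
    using assoc_r[OF v1 y] by blast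
  have "u \<in> add b (mul b (mul a a))" using u1 comm by (simp add: mac)
  hence "u = b" by (rule R1)
  hence "v \<in> add (mul (mul b b) a) b" using u2 comm by blast
  then obtain u' where u'1: "u' \<in> add a (mul (mul b b) a)" and u'2: "mul d s \<in> add u' b"
    using assoc_r[OF v2] by blast
  have "u' \<in> add a (mul a (mul b b))" using u'1 by (simp add: mac)
  hence "u' = a" by (rule R1)
  thus ?thesis using u'2 dsd by simp
qed

lemma Dt_sup: "d \<in> add a b \<Longrightarrow> d \<in> Dt mul (neg one) Dr a b"
proof -
  assume d: "d \<in> add a b"
  have "mul d (mul d d) \<in> add (mul a (mul d d)) (mul b (mul d d))" by (rule dist[OF d])
  hence d1: "d \<in> add (mul (mul d d) a) (mul (mul d d) b)" by (simp add: mC)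
  have "b \<in> add (neg a) d" by (rule rev2[OF d])
  hence "neg a \<in> add b (neg d)" by (rule rev1)
  hence "neg a \<in> add (neg d) b" using comm by blast
  hence "mul (neg a) (mul a a) \<in> add (mul (neg d) (mul a a)) (mul b (mul a a))" by (rule dist)
  hence d2: "neg a \<in> add (mul (mul (neg a) (neg a)) (neg d)) (mul (mul (neg a) (neg a)) b)"
    unfolding neg_sq by (simp add: neg_mul_l neg_mul_r mac)
  have "a \<in> add d (neg b)" by (rule rev1[OF d])
  hence "neg b \<in> add (neg d) a" by (rule rev2)
  hence "neg b \<in> add a (neg d)" using comm by blast
  hence "mul (neg b) (mul b b) \<in> add (mul a (mul b b)) (mul (neg d) (mul b b))" by (rule dist)
  hence d3: "neg b \<in> add (mul (mul (neg b) (neg b)) a) (mul (mul (neg b) (neg b)) (neg d))"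
    unfolding neg_sq by (simp add: neg_mul_l neg_mul_r mac)
  show ?thesis unfolding Dt_def Dr_def using d1 d2 d3 by (simp add: mneg)
qed

lemma Dt_eq: "Dt mul (neg one) Dr a b = add a b"
  using Dt_sub Dt_sup by blast

lemma RS4: "e \<in> Dr (mul (mul c c) a) (mul (mul d d) b) \<Longrightarrow> e \<in> Dr a b"
proof -
  assume "e \<in> Dr (mul (mul c c) a) (mul (mul d d) b)"
  hence h: "e \<in> add (mul (mul e e) (mul (mul c c) a)) (mul (mul e e) (mul (mul d d) b))" unfolding Dr_def by simp
  define P where "P = mul (mul e e) a"
  define Q where "Q = mul (mul e e) b"
  have h1: "e \<in> add (mul (mul c c) P) (mul (mul d d) Q)" using h unfolding P_def Q_def by (simp add: mac)
  have PP: "mul (mul e e) P = P" unfolding P_def by (simp add: mA)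
  have QQ: "mul (mul e e) Q = Q" unfolding Q_def by (simp add: mA)
  have "e \<in> add P (mul (mul d d) Q)" by (rule W[OF h1 PP])
  hence "e \<in> add (mul (mul d d) Q) P" using comm by blast
  hence "e \<in> add Q P" by (rule W[OF _ QQ])
  hence "e \<in> add P Q" using comm by blast
  thus ?thesis unfolding Dr_def P_def Q_def by simp
qed

lemma RS5: "mul a d = mul b d \<Longrightarrow> mul a e = mul b e \<Longrightarrow> c \<in> Dr d e \<Longrightarrow> mul a c = mul b c"
proof -
  assume ad: "mul a d = mul b d" and ae: "mul a e = mul b e" and "c \<in> Dr d e"
  hence c: "c \<in> add (mul (mul c c) d) (mul (mul c c) e)" unfolding Dr_def by simp
  obtain s0 where s0: "s0 \<in> add (mul d d) (mul e e)" using ne by blast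
  obtain s1 where s1: "s1 \<in> add (mul (mul (mul c c) d) (mul (mul c c) d)) (mul (mul (mul c c) e) (mul (mul c c) e))"
    using ne by blast
  have cs1: "mul c s1 = c" by (rule SL[OF c s1])
  have "mul (mul c c) s0 \<in> add (mul (mul (mul c c) d) (mul (mul c c) d)) (mul (mul (mul c c) e) (mul (mul c c) e))"
    using dist[OF s0, of "mul c c"] by (simp add: mac)
  hence "s1 = mul (mul c c) s0" using R2 s1 by blast
  hence cs0: "mul c s0 = c" using cs1 by (simp add: mA[symmetric])
  have bd: "mul b (mul d d) = mul a (mul d d)" using ad by (simp add: mA[symmetric])
  have be: "mul b (mul e e) = mul a (mul e e)" using ae by (simp add: mA[symmetric])
  have "mul s0 b \<in> add (mul (mul d d) b) (mul (mul e e) b)" by (rule dist[OF s0])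
  hence "mul b s0 \<in> add (mul b (mul d d)) (mul b (mul e e))" by (simp add: mC)
  hence "mul b s0 \<in> add (mul a (mul d d)) (mul a (mul e e))" using bd be by simp
  hence bs: "mul b s0 = mul a s0" by (rule U[OF _ s0])
  have "mul a c = mul a (mul c s0)" using cs0 by simp
  also have "\<dots> = mul c (mul a s0)" by (simp only: mac)
  also have "\<dots> = mul c (mul b s0)" using bs by simp
  also have "\<dots> = mul b (mul c s0)" by (simp only: mac)
  also have "\<dots> = mul b c" using cs0 by simp
  finally show ?thesis .
qed

lemma RS7: "c \<in> add a (neg b) \<Longrightarrow> c \<in> add b (neg a) \<Longrightarrow> a = b"
proof -
  assume c1: "c \<in> add a (neg b)" and c2: "c \<in> add b (neg a)"
  have "a \<in> add c b" using rev1[OF c1] by simp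
  hence "a \<in> add b c" using comm by blast
  then obtain u where u1: "u \<in> add b b" and u2: "a \<in> add u (neg a)" using assoc_r c2 by blast
  have "u = b" using self_eq u1 by blast
  hence "b \<in> add a a" using rev1[OF u2] by simp
  hence "b = a" by (rule self_eq)
  thus ?thesis by simp
qed

lemma RS8: "a \<in> Dr b c \<Longrightarrow> mul a a \<in> Dr (mul b b) (mul c c)"
proof -
  assume "a \<in> Dr b c"
  hence a: "a \<in> add (mul (mul a a) b) (mul (mul a a) c)" unfolding Dr_def by simp
  obtain s where s: "s \<in> add (mul (mul a b) (mul a b)) (mul (mul a c) (mul a c))" using ne by blast
  have s': "s \<in> add (mul (mul (mul a a) b) (mul (mul a a) b)) (mul (mul (mul a a) c) (mul (mul a a) c))"
    using s by (simp add: mac)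
  have as: "mul a s = a" by (rule SL[OF a s'])
  have "mul s (mul a a) \<in> add (mul (mul (mul a b) (mul a b)) (mul a a)) (mul (mul (mul a c) (mul a c)) (mul a a))"
    by (rule dist[OF s])
  hence "mul s (mul a a) \<in> add (mul (mul a b) (mul a b)) (mul (mul a c) (mul a c))" by (simp add: mac)
  hence "mul s (mul a a) = s" using R2 s by blast
  moreover have "mul s (mul a a) = mul a a" using as by (simp add: mac)
  ultimately have "s = mul a a" by simp
  hence "mul a a \<in> add (mul (mul a b) (mul a b)) (mul (mul a c) (mul a c))" using s by simp
  thus ?thesis unfolding Dr_def by (simp add: mac)
qed

lemma RSall: "real_semigroup mul one zero (neg one) Dr"
  unfolding real_semigroup_def
proof (intro conjI allI impI)
  show "ternary_semigroup mul one zero (neg one)"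
    unfolding ternary_semigroup_def
  proof (intro conjI allI impI)
    show "neg one \<noteq> one"
    proof
      assume h: "neg one = one"
      have "zero \<in> add one (neg one)" by (rule zero_in)
      hence "zero \<in> add one one" using h by simp
      hence "zero = one" by (rule self_eq)
      thus False using one_ne by simp
    qed
    fix x assume h: "x = mul (neg one) x"
    have "zero \<in> add x (neg x)" by (rule zero_in)
    hence "zero \<in> add x x" using h by (simp add: mneg)
    hence "zero = x" by (rule self_eq)
    thus "x = zero" by simp
  qed (simp_all add: mac mm)
next
  fix a b c show "c \<in> Dr a b \<longleftrightarrow> c \<in> Dr b a" unfolding Dr_def using comm by blast
next
  fix a b show "a \<in> Dr a b" unfolding Dr_def using L1'[of a "mul a b"] by (simp add: mac)
next
  fix a b c d assume "a \<in> Dr b c"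
  hence "mul a d \<in> add (mul (mul (mul a a) b) d) (mul (mul (mul a a) c) d)" unfolding Dr_def using dist by simp
  thus "mul a d \<in> Dr (mul b d) (mul c d)" unfolding Dr_def by (simp add: mac)
next
  fix a b c d e
  assume "a \<in> Dt mul (neg one) Dr b c \<and> c \<in> Dt mul (neg one) Dr d e"
  hence "a \<in> add b c" "c \<in> add d e" by (simp_all add: Dt_eq)
  then obtain u where "u \<in> add b d" "a \<in> add u e" using assoc_r by blast
  thus "\<exists>x\<in>Dt mul (neg one) Dr b d. a \<in> Dt mul (neg one) Dr x e" by (auto simp: Dt_eq)
next
  fix a b c d e show "e \<in> Dr (mul (mul c c) a) (mul (mul d d) b) \<Longrightarrow> e \<in> Dr a b" by (rule RS4)
next
  fix a b c d e
  assume "mul a d = mul b d \<and> mul a e = mul b e \<and> c \<in> Dr d e"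
  thus "mul a c = mul b c" using RS5 by blast
next
  fix a b c assume "c \<in> Dr a b"
  thus "c \<in> Dt mul (neg one) Dr (mul (mul c c) a) (mul (mul c c) b)" unfolding Dt_eq Dr_def by simp
next
  fix a b
  assume "Dt mul (neg one) Dr a (mul (neg one) b) \<inter> Dt mul (neg one) Dr b (mul (neg one) a) \<noteq> {}"
  then obtain c where "c \<in> add a (neg b)" "c \<in> add b (neg a)" by (auto simp: Dt_eq mneg)
  thus "a = b" by (rule RS7)
next
  fix a b c show "a \<in> Dr b c \<Longrightarrow> mul a a \<in> Dr (mul b b) (mul c c)" by (rule RS8)
qed

end

theorem theorem6p10:
  fixes add :: "'a \<Rightarrow> 'a \<Rightarrow> 'a set" and neg :: "'a \<Rightarrow> 'a"
    and mul :: "'a \<Rightarrow> 'a \<Rightarrow> 'a" and zero one :: 'a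
    and D :: "'a \<Rightarrow> 'a \<Rightarrow> 'a set"
  assumes "real_reduced_multiring add neg mul zero one"
    and "\<And>a b. D a b = {d. d \<in> add (mul (mul d d) a) (mul (mul d d) b)}"
  shows "real_semigroup mul one zero (neg one) D \<and>
         (\<forall>a b. Dt mul (neg one) D a b = add a b)"
proof -
  interpret rrm add neg mul zero one by (rule rrm.intro) (rule assms(1))
  have DD: "D = Dr" using assms(2) by (simp add: Dr_def fun_eq_iff)
  show ?thesis unfolding DD using RSall Dt_eq by blast
qed

end
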